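(* Let $H\in C^\infty(\mathbb{R}^2)$ be convex and let $U\subset\mathbb{R}^2$ be a domain. For every $v\in C^\infty(U)$, $$\langle D^2_{pp}H(Dv)D[H(Dv)],D[H(Dv)]\rangle-\operatorname{div}[D_pH(Dv)]\,\mathscr A_H[v]=(-\det D^2v)\langle[D^2_{pp}H(Dv)]^*D_pH(Dv),D_pH(Dv)\rangle\quad\text{in }U.$$
   Context: $\mathscr A_H[v]:=\sum_{i,j=1}^2H_{p_i}(Dv)H_{p_j}(Dv)v_{x_ix_j}$. For a $2\times2$ matrix $A=(a_{ij})$, $A^*$ is its adjugate $\begin{pmatrix}a_{22}&-a_{21}\\-a_{12}&a_{11}\end{pmatrix}$. *)

theory Defs
  imports "HOL-Analysis.Analysis"
begin

text \<open>Points of the plane are elements of real^2; coordinates are indexed by 1 and 2 :: 2.\<close>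

definition partial :: "2 \<Rightarrow> (real^2 \<Rightarrow> real) \<Rightarrow> real^2 \<Rightarrow> real" where
  "partial i f x = deriv (\<lambda>t. f (x + t *\<^sub>R axis i 1)) 0"

fun iter_partial :: "2 list \<Rightarrow> (real^2 \<Rightarrow> real) \<Rightarrow> real^2 \<Rightarrow> real" where
  "iter_partial [] f = f"
| "iter_partial (i # is) f = partial i (iter_partial is f)"

definition smooth_on :: "(real^2) set \<Rightarrow> (real^2 \<Rightarrow> real) \<Rightarrow> bool" where
  "smooth_on U f \<longleftrightarrow> (\<forall>is. \<forall>x\<in>U. iter_partial is f differentiable (at x))"

definition grad :: "(real^2 \<Rightarrow> real) \<Rightarrow> real^2 \<Rightarrow> real^2" where
  "grad f x = (\<chi> i. partial i f x)"

definition hess :: "(real^2 \<Rightarrow> real) \<Rightarrow> real^2 \<Rightarrow> real^2^2" where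
  "hess f x = (\<chi> i j. partial i (partial j f) x)"

definition adj2 :: "real^2^2 \<Rightarrow> real^2^2" where
  "adj2 A = (\<chi> i j. if i = 1 \<and> j = 1 then A $ 2 $ 2
                    else if i = 1 \<and> j = 2 then - A $ 2 $ 1
                    else if i = 2 \<and> j = 1 then - A $ 1 $ 2
                    else A $ 1 $ 1)"

definition AH :: "(real^2 \<Rightarrow> real) \<Rightarrow> (real^2 \<Rightarrow> real) \<Rightarrow> real^2 \<Rightarrow> real" where
  "AH H v x = (\<Sum>i\<in>UNIV. \<Sum>j\<in>UNIV.
      partial i H (grad v x) * partial j H (grad v x) * partial i (partial j v) x)"

end

theory Submission
  imports Defs
begin

lemma L0:
  assumes "(f has_derivative f') (at (y + t0 *\<^sub>R e))"
  shows "((\<lambda>t. f (y + t *\<^sub>R e)) has_real_derivative f' e) (at t0)"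
proof -
  have d: "((\<lambda>t. y + t *\<^sub>R e) has_derivative (\<lambda>t. t *\<^sub>R e)) (at t0)"
    by (auto intro!: derivative_eq_intros)
  have "((\<lambda>t. f (y + t *\<^sub>R e)) has_derivative (\<lambda>t. f' (t *\<^sub>R e))) (at t0)"
    using has_derivative_compose[OF d] assms by blast
  moreover have "\<And>t. t * f' e = f' (t *\<^sub>R e)"
    using assms has_derivative_linear linear_scale by (metis real_scaleR_def)
  ultimately show ?thesis by (rule has_derivative_imp_has_field_derivative)
qed

lemma partial_eq:
  assumes "(f has_derivative f') (at z)"
  shows "partial k f z = f' (axis k 1)"
  unfolding partial_def
  by (rule DERIV_imp_deriv, rule L0) (use assms in simp)

lemma L1:
  assumes "f differentiable (at (y + t0 *\<^sub>R axis k 1))"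
  shows "((\<lambda>t. f (y + t *\<^sub>R axis k 1)) has_real_derivative partial k f (y + t0 *\<^sub>R axis k 1)) (at t0)"
proof -
  obtain f' where f': "(f has_derivative f') (at (y + t0 *\<^sub>R axis k 1))"
    using assms by (auto simp: differentiable_def)
  show ?thesis using L0[OF f'] partial_eq[OF f'] by simp
qed

lemma grad_split: "grad v y = partial 1 v y *\<^sub>R axis 1 1 + partial 2 v y *\<^sub>R axis 2 1"
  by (simp add: grad_def vec_eq_iff forall_2 axis_def)

lemma lin2:
  assumes "linear G"
  shows "G (a *\<^sub>R axis 1 1 + b *\<^sub>R axis 2 1) = a * G (axis 1 1) + b * G (axis (2::2) 1)"
  using assms by (simp add: linear_add linear_scale)

lemma chain:
  assumes g: "g differentiable (at (grad v x))"
    and v1: "partial 1 v differentiable (at x)" and v2: "partial 2 v differentiable (at x)"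
  shows "partial k (\<lambda>y. g (grad v y)) x
     = partial 1 g (grad v x) * partial k (partial 1 v) x + partial 2 g (grad v x) * partial k (partial 2 v) x"
proof -
  obtain G where G: "(g has_derivative G) (at (grad v x))" using g by (auto simp: differentiable_def)
  obtain D1 where D1: "(partial 1 v has_derivative D1) (at x)" using v1 by (auto simp: differentiable_def)
  obtain D2 where D2: "(partial 2 v has_derivative D2) (at x)" using v2 by (auto simp: differentiable_def)
  have gv: "(grad v has_derivative (\<lambda>d. D1 d *\<^sub>R axis 1 1 + D2 d *\<^sub>R axis 2 1)) (at x)"
    unfolding grad_split[abs_def]
    by (intro has_derivative_add has_derivative_scaleR_left D1 D2)
  have c: "((\<lambda>y. g (grad v y)) has_derivative (\<lambda>d. G (D1 d *\<^sub>R axis 1 1 + D2 d *\<^sub>R axis 2 1))) (at x)"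
    using has_derivative_compose[OF gv G] by simp
  have lG: "linear G" using G has_derivative_linear by blast
  show ?thesis
    using partial_eq[OF c, of k] partial_eq[OF G, of 1] partial_eq[OF G, of 2]
      partial_eq[OF D1, of k] partial_eq[OF D2, of k] lin2[OF lG]
    by (simp add: mult.commute)
qed


lemma mixed_step:
  fixes f :: "real^2 \<Rightarrow> real" and i j :: 2
  assumes h: "h > 0"
    and dif: "\<And>s t. 0 \<le> s \<Longrightarrow> s \<le> h \<Longrightarrow> 0 \<le> t \<Longrightarrow> t \<le> h \<Longrightarrow>
      f differentiable (at (x + s *\<^sub>R axis i 1 + t *\<^sub>R axis j 1)) \<and>
      partial i f differentiable (at (x + s *\<^sub>R axis i 1 + t *\<^sub>R axis j 1))"
  shows "\<exists>s t. 0 < s \<and> s < h \<and> 0 < t \<and> t < h \<and>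
    f (x + h *\<^sub>R axis i 1 + h *\<^sub>R axis j 1) - f (x + h *\<^sub>R axis i 1) - f (x + h *\<^sub>R axis j 1) + f x
    = h^2 * partial j (partial i f) (x + s *\<^sub>R axis i 1 + t *\<^sub>R axis j 1)"
proof -
  define ei where "ei = axis i (1::real)"
  define ej where "ej = axis j (1::real)"
  define g where "g s = f ((x + h *\<^sub>R ej) + s *\<^sub>R ei) - f (x + s *\<^sub>R ei)" for s
  have "DERIV g s :> partial i f ((x + h *\<^sub>R ej) + s *\<^sub>R ei) - partial i f (x + s *\<^sub>R ei)"
    if "0 \<le> s" "s \<le> h" for s
  proof -
    have d1: "f differentiable (at ((x + h *\<^sub>R ej) + s *\<^sub>R ei))"
      using dif[of s h] that h by (simp add: ei_def ej_def add_ac)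
    have d2: "f differentiable (at (x + s *\<^sub>R ei))"
      using dif[of s 0] that h by (simp add: ei_def ej_def)
    show ?thesis unfolding g_def
      using L1[OF d1[unfolded ei_def]] L1[OF d2[unfolded ei_def]]
      by (intro derivative_intros) (auto simp: ei_def)
  qed
  from MVT2[OF h this] obtain s where s: "0 < s" "s < h"
    and gs: "g h - g 0 = (h - 0) * (partial i f ((x + h *\<^sub>R ej) + s *\<^sub>R ei) - partial i f (x + s *\<^sub>R ei))"
    by blast
  define k where "k t = partial i f ((x + s *\<^sub>R ei) + t *\<^sub>R ej)" for t
  have "DERIV k t :> partial j (partial i f) ((x + s *\<^sub>R ei) + t *\<^sub>R ej)"
    if "0 \<le> t" "t \<le> h" for t
  proof -
    have d1: "partial i f differentiable (at ((x + s *\<^sub>R ei) + t *\<^sub>R ej))"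
      using dif[of s t] that s by (simp add: ei_def ej_def)
    show ?thesis unfolding k_def ej_def using L1[OF d1[unfolded ej_def]] by simp
  qed
  from MVT2[OF h this] obtain t where t: "0 < t" "t < h"
    and kt: "k h - k 0 = (h - 0) * partial j (partial i f) ((x + s *\<^sub>R ei) + t *\<^sub>R ej)"
    by blast
  have "f (x + h *\<^sub>R ei + h *\<^sub>R ej) - f (x + h *\<^sub>R ei) - f (x + h *\<^sub>R ej) + f x = g h - g 0"
    by (simp add: g_def add_ac)
  also have "\<dots> = h * (k h - k 0)" using gs by (simp add: k_def add_ac)
  also have "\<dots> = h^2 * partial j (partial i f) ((x + s *\<^sub>R ei) + t *\<^sub>R ej)"
    using kt by (simp add: power2_eq_square)
  finally show ?thesis using s t unfolding ei_def ej_def by blast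
qed

lemma schwarz:
  fixes f :: "real^2 \<Rightarrow> real"
  assumes S: "open S" "x \<in> S"
    and dif: "\<And>y. y \<in> S \<Longrightarrow> f differentiable (at y) \<and> partial 1 f differentiable (at y)
        \<and> partial 2 f differentiable (at y)"
    and c12: "continuous (at x) (partial 1 (partial 2 f))"
    and c21: "continuous (at x) (partial 2 (partial 1 f))"
  shows "partial 1 (partial 2 f) x = partial 2 (partial 1 f) x"
proof (rule ccontr)
  let ?a = "partial 1 (partial 2 f) x" and ?b = "partial 2 (partial 1 f) x"
  assume ne: "?a \<noteq> ?b"
  define e where "e = \<bar>?a - ?b\<bar> / 3"
  have e: "e > 0" using ne by (simp add: e_def)
  obtain d0 where d0: "d0 > 0" "ball x d0 \<subseteq> S" using S open_contains_ball by blast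
  obtain d1 where d1: "d1 > 0" "\<And>y. dist y x < d1 \<Longrightarrow> dist (partial 1 (partial 2 f) y) ?a < e"
    using c12 e unfolding continuous_at_eps_delta by blast
  obtain d2 where d2: "d2 > 0" "\<And>y. dist y x < d2 \<Longrightarrow> dist (partial 2 (partial 1 f) y) ?b < e"
    using c21 e unfolding continuous_at_eps_delta by blast
  define d where "d = min d0 (min d1 d2)"
  have d: "d > 0" using d0 d1 d2 by (simp add: d_def)
  define h where "h = d / 3"
  have h: "h > 0" using d by (simp add: h_def)
  have close: "dist (x + s *\<^sub>R axis i 1 + t *\<^sub>R axis j 1) x < d"
    if "0 \<le> s" "s \<le> h" "0 \<le> t" "t \<le> h" for s t and i j :: 2
  proof -
    have "dist (x + s *\<^sub>R axis i 1 + t *\<^sub>R axis j 1) x = norm (s *\<^sub>R axis i (1::real) + t *\<^sub>R axis j 1)"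
      by (simp add: dist_norm)
    also have "\<dots> \<le> norm (s *\<^sub>R axis i (1::real)) + norm (t *\<^sub>R axis j (1::real))"
      by (rule norm_triangle_ineq)
    also have "\<dots> = s + t" using that by simp
    also have "\<dots> < d" using that h unfolding h_def by linarith
    finally show ?thesis .
  qed
  have inS: "x + s *\<^sub>R axis i 1 + t *\<^sub>R axis j 1 \<in> S"
    if "0 \<le> s" "s \<le> h" "0 \<le> t" "t \<le> h" for s t and i j :: 2
    using close[OF that, of i j] d0(2) unfolding d_def by (auto simp: dist_commute)
  have difij: "f differentiable (at (x + s *\<^sub>R axis i 1 + t *\<^sub>R axis j 1)) \<and>
      partial i f differentiable (at (x + s *\<^sub>R axis i 1 + t *\<^sub>R axis j 1))"
    if "0 \<le> s" "s \<le> h" "0 \<le> t" "t \<le> h" for s t and i j :: 2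
    using dif[of "x + s *\<^sub>R axis i 1 + t *\<^sub>R axis j 1"] inS[of s t i j] that using exhaust_2[of i] by auto
  obtain s1 t1 where st1: "0 < s1" "s1 < h" "0 < t1" "t1 < h"
    and E1: "f (x + h *\<^sub>R axis 1 1 + h *\<^sub>R axis 2 1) - f (x + h *\<^sub>R axis 1 1) - f (x + h *\<^sub>R axis 2 1) + f x
      = h^2 * partial 2 (partial 1 f) (x + s1 *\<^sub>R axis 1 1 + t1 *\<^sub>R axis 2 1)"
    using mixed_step[where i=1 and j=2 and f=f and x=x, OF h difij] by blast
  obtain s2 t2 where st2: "0 < s2" "s2 < h" "0 < t2" "t2 < h"
    and E2: "f (x + h *\<^sub>R axis 2 1 + h *\<^sub>R axis 1 1) - f (x + h *\<^sub>R axis 2 1) - f (x + h *\<^sub>R axis 1 1) + f x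
      = h^2 * partial 1 (partial 2 f) (x + s2 *\<^sub>R axis 2 1 + t2 *\<^sub>R axis 1 1)"
    using mixed_step[where i=2 and j=1 and f=f and x=x, OF h difij] by blast
  have eq: "partial 2 (partial 1 f) (x + s1 *\<^sub>R axis 1 1 + t1 *\<^sub>R axis 2 1)
      = partial 1 (partial 2 f) (x + s2 *\<^sub>R axis 2 1 + t2 *\<^sub>R axis 1 1)"
  proof -
    have hsw: "x + h *\<^sub>R axis 2 1 + h *\<^sub>R axis 1 1 = x + h *\<^sub>R axis 1 1 + h *\<^sub>R axis (2::2) 1"
      by (simp add: add_ac)
    have "h^2 * partial 2 (partial 1 f) (x + s1 *\<^sub>R axis 1 1 + t1 *\<^sub>R axis 2 1)
      = h^2 * partial 1 (partial 2 f) (x + s2 *\<^sub>R axis 2 1 + t2 *\<^sub>R axis 1 1)"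
      using E1 E2[unfolded hsw] by linarith
    then show ?thesis using h by simp
  qed
  have "dist (x + s1 *\<^sub>R axis 1 1 + t1 *\<^sub>R axis 2 1) x < d2"
    using close[of s1 t1 1 2] st1 unfolding d_def by auto
  then have A: "\<bar>partial 2 (partial 1 f) (x + s1 *\<^sub>R axis 1 1 + t1 *\<^sub>R axis 2 1) - ?b\<bar> < e"
    using d2(2) by (simp add: dist_real_def)
  have "dist (x + s2 *\<^sub>R axis 2 1 + t2 *\<^sub>R axis 1 1) x < d1"
    using close[of s2 t2 2 1] st2 unfolding d_def by auto
  then have B: "\<bar>partial 1 (partial 2 f) (x + s2 *\<^sub>R axis 2 1 + t2 *\<^sub>R axis 1 1) - ?a\<bar> < e"
    using d1(2) by (simp add: dist_real_def)
  from A B eq have "\<bar>?a - ?b\<bar> < 2 * e" by linarith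
  moreover have "3 * e = \<bar>?a - ?b\<bar>" by (simp add: e_def)
  ultimately show False using e by linarith
qed


lemma grad_nth: "grad f x $ i = partial i f x"
  by (simp add: grad_def)

theorem lemma2p1:
  fixes H v :: "real^2 \<Rightarrow> real" and U :: "(real^2) set"
  assumes "smooth_on UNIV H" and "convex_on UNIV H"
    and "open U" and "connected U"
    and "smooth_on U v"
    and "x \<in> U"
  shows "(hess H (grad v x) *v grad (\<lambda>y. H (grad v y)) x) \<bullet> grad (\<lambda>y. H (grad v y)) x
         - (\<Sum>i\<in>UNIV. partial i (\<lambda>y. partial i H (grad v y)) x) * AH H v x
       = (- det (hess v x)) * ((adj2 (hess H (grad v x)) *v grad H (grad v x)) \<bullet> grad H (grad v x))"
proof -
  have sH: "\<And>ls y. iter_partial ls H differentiable (at y)"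
    using assms(1) unfolding smooth_on_def by blast
  have sv: "\<And>ls y. y \<in> U \<Longrightarrow> iter_partial ls v differentiable (at y)"
    using assms(5) unfolding smooth_on_def by blast
  have H0: "\<And>y. H differentiable (at y)" using sH[where ls="[]"] by simp
  have H1: "partial i H differentiable (at y)" for i y using sH[where ls="[i]"] by simp
  have H2: "partial i (partial j H) differentiable (at y)" for i j y using sH[where ls="[i,j]"] by simp
  have v0: "\<And>y. y \<in> U \<Longrightarrow> v differentiable (at y)" using sv[where ls="[]"] by simp
  have v1: "y \<in> U \<Longrightarrow> partial i v differentiable (at y)" for i y using sv[where ls="[i]"] by simp
  have v2: "partial i (partial j v) differentiable (at x)" for i j using sv[where ls="[i,j]"] assms(6) by simp
  define p where "p = grad v x"
  have symH: "partial 1 (partial 2 H) p = partial 2 (partial 1 H) p"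
    by (rule schwarz[of UNIV]) (auto simp: H0 H1 H2 differentiable_imp_continuous_within)
  have symv: "partial 1 (partial 2 v) x = partial 2 (partial 1 v) x"
    by (rule schwarz[of U]) (auto simp: assms(3,6) v0 v1 v2 differentiable_imp_continuous_within)
  have cH: "partial k (\<lambda>y. H (grad v y)) x
     = partial 1 H p * partial k (partial 1 v) x + partial 2 H p * partial k (partial 2 v) x" for k
    unfolding p_def by (rule chain) (auto simp: H0 v1 assms(6))
  have cHi: "partial k (\<lambda>y. partial i H (grad v y)) x
     = partial 1 (partial i H) p * partial k (partial 1 v) x + partial 2 (partial i H) p * partial k (partial 2 v) x" for k i
    unfolding p_def by (rule chain) (auto simp: H1 v1 assms(6))
  show ?thesis
    unfolding p_def[symmetric]
    by (simp add: cH cHi hess_def grad_nth AH_def adj2_def det_2 sum_2 matrix_vector_mult_def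
        inner_vec_def p_def[symmetric] symH symv algebra_simps)
qed

end
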